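(* Let $P$ be a causal program and $I$ an interpretation. Then $I$ is the least causal model of $P^I$ if and only if $I$ is the least causal model of $P^I_u$. In particular, causal stable models are the same whether the reduct $P^I$ or the uniform reduct $P^I_u$ is used.
   Context: Fix a set of labels $Lb$ and a set of atoms $At$. Terms are built by $t::=l\mid\prod S\mid\sum S\mid t_1\cdot t_2$ with $l\in Lb$ and $S$ any (possibly empty or infinite) set of terms; $1:=\prod\emptyset$, $0:=\sum\emptyset$; finite sums/products written with $+$, $*$. Causal values are equivalence classes of terms modulo the axioms of a completely distributive complete lattice with meet $*$ and join $+$ together with: $t\cdot(u\cdot w)=(t\cdot u)\cdot w$; $t=t+u\cdot t\cdot w$ and $u\cdot t\cdot w=t*u\cdot t\cdot w$; $1\cdot t=t=t\cdot1$; $t\cdot0=0=0\cdot t$; $l\cdot l=l$ for labels $l$; $\cdot$ distributes over (possibly infinite) sums on both sides; for terms $c,d,e$ without $+$: $c\cdot d\cdot e=(c\cdot d)*(d\cdot e)$ if $d\ne1$, $c\cdot(d*e)=(c\cdot d)*(c\cdot e)$, $(c*d)\cdot e=(c\cdot e)*(d\cdot e)$. $\mathbf V$ is the set of values, ordered by $t\le u$ iff $t*u=t$; $\mathbf C\subseteq\mathbf V$ is the set of values with a representative without $+$. $G\le_{\max}t$ means $G\in\mathbf C$, $G\le t$ and no $G'\in\mathbf C$ has $G<G'\le t$. A causal query is $\psi:\mathbf C\times\mathbf V\to\{0,1\}$ with $\psi(G,t)\le\psi(G,u)$ whenever $t\ge u$; monotonic if $\psi(G,u)\le\psi(G',w)$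 whenever $G\le G'$ (any $u,w$). A causal literal is $(\psi::A)$, $A\in At$. Literals: $(\psi::A)$ (positive), $\neg(\psi::A)$ (negative), $\neg\neg(\psi::A)$ (consistent). A causal program is a set of rules $r:H\leftarrow B_1,\dots,B_m$ with $r\in Lb$ or $r=1$, $H\in At$, each $B_i$ a literal or a term. An interpretation is $I:At\to\mathbf V$, ordered pointwise. $I(\psi::A)=\sum\{G\le_{\max}I(A):\psi(G,I(A))=1\}$; $I(t)=t$ for terms; $I(\neg L)=1$ iff $I(L)=0$ (else $0$); $I(\neg\neg L)=1$ iff $I(L)\ne0$ (else $0$); $I\models L$ iff $I(L)\ne0$. $I$ is a causal model of $P$ iff $(I(B_1)*\dots*I(B_m))\cdot r\le I(H)$ for every rule (empty product $=1$). Reduct: $\psi^t(G,u)=1$ iff there is $G'\in\mathbf C$ with $G'\le G$, $G'\le_{\max}t$, $\psi(G',t)=1$ (else $0$). The reduct of $(\psi::A)$ w.r.t. $I$ is $(\psi::A)$ if $\psi$ is monotonic and $(\psi^{I(A)}::A)$ otherwise. $P^I$: (i) delete every rule whose body has a negative or consistent literal not satisfied by $I$, (ii) delete the remaining negative and consistent literals, (iii) replace each remaining causal literal by its reduct. The uniform reduct $P^I_u$ is defined identically except that in step (iii) every remaining causal literal $(\psi::A)$, monotonic or not, is replaced by $(\psi^{I(A)}::A)$. Both $P^I$ and $P^I_u$ are positive programs with only monotonic queries and have least causal models. $I$ is a causal stable model of $P$ iff $I$ is the least causal model of $P^I$. *)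

theory Defs
  imports Main
begin

text \<open>
Causal values are represented concretely (following Cabalar, Fandinno and Fink,
"Causal graph justifications of logic programs") as ideals of causal graphs:
a causal graph is a transitively and reflexively closed set of edges over the
labels; a value is a set of causal graphs closed under taking supergraphs
(the order on graphs is reverse inclusion, so these are the order ideals).
Under this representation the meet is intersection, the join is union, the
order on values is inclusion, 0 is the empty ideal and 1 the set of all graphs.
\<close>

definition cgraph :: "('l \<times> 'l) set \<Rightarrow> bool" where
  "cgraph G \<longleftrightarrow> trans G \<and> (\<forall>(x, y) \<in> G. (x, x) \<in> G \<and> (y, y) \<in> G)"

type_synonym 'l cval = "('l \<times> 'l) set set"

definition is_val :: "'l cval \<Rightarrow> bool" where
  "is_val t \<longleftrightarrow> (\<forall>G \<in> t. cgraph G) \<and>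
                 (\<forall>G G'. G \<in> t \<longrightarrow> cgraph G' \<longrightarrow> G \<subseteq> G' \<longrightarrow> G' \<in> t)"

definition one_val :: "'l cval" where
  "one_val = {G. cgraph G}"

definition lab_val :: "'l \<Rightarrow> 'l cval" where
  "lab_val l = {G. cgraph G \<and> (l, l) \<in> G}"

definition prod_val :: "'l cval set \<Rightarrow> 'l cval" where
  "prod_val S = one_val \<inter> \<Inter> S"

definition gcat :: "('l \<times> 'l) set \<Rightarrow> ('l \<times> 'l) set \<Rightarrow> ('l \<times> 'l) set" where
  "gcat G1 G2 = (G1 \<union> G2 \<union> {(x, y). x \<in> Field G1 \<and> y \<in> Field G2})\<^sup>+"

definition app_val :: "'l cval \<Rightarrow> 'l cval \<Rightarrow> 'l cval" where
  "app_val t u = {G. cgraph G \<and> (\<exists>G1 \<in> t. \<exists>G2 \<in> u. gcat G1 G2 \<subseteq> G)}"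

text \<open>Principal ideal of a graph; the set C of values with a +-free
representative consists exactly of these.\<close>
definition prin :: "('l \<times> 'l) set \<Rightarrow> 'l cval" where
  "prin G = {G'. cgraph G' \<and> G \<subseteq> G'}"

definition is_cval :: "'l cval \<Rightarrow> bool" where
  "is_cval t \<longleftrightarrow> (\<exists>G. cgraph G \<and> t = prin G)"

definition maxle :: "'l cval \<Rightarrow> 'l cval \<Rightarrow> bool" where
  "maxle G t \<longleftrightarrow> is_cval G \<and> G \<subseteq> t \<and> \<not> (\<exists>G'. is_cval G' \<and> G \<subset> G' \<and> G' \<subseteq> t)"

type_synonym 'l query = "'l cval \<Rightarrow> 'l cval \<Rightarrow> bool"

definition causal_query :: "'l query \<Rightarrow> bool" where
  "causal_query \<psi> \<longleftrightarrow> (\<forall>G t u. is_cval G \<longrightarrow> is_val t \<longrightarrow> is_val u \<longrightarrow>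
      u \<subseteq> t \<longrightarrow> \<psi> G t \<longrightarrow> \<psi> G u)"

definition monotonic_query :: "'l query \<Rightarrow> bool" where
  "monotonic_query \<psi> \<longleftrightarrow> (\<forall>G G' u w. is_cval G \<longrightarrow> is_cval G' \<longrightarrow> is_val u \<longrightarrow> is_val w \<longrightarrow>
      G \<subseteq> G' \<longrightarrow> \<psi> G u \<longrightarrow> \<psi> G' w)"

definition qred :: "'l query \<Rightarrow> 'l cval \<Rightarrow> 'l query" where
  "qred \<psi> t = (\<lambda>G u. \<exists>G'. is_cval G' \<and> G' \<subseteq> G \<and> maxle G' t \<and> \<psi> G' t)"

datatype ('l, 'a) bodyelem =
    CPos "'l query" 'a
  | CNeg "'l query" 'a
  | CCons "'l query" 'a
  | BTerm "'l cval"

text \<open>A rule: label (None stands for the rule label 1), head atom, body.\<close>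
type_synonym ('l, 'a) crule = "'l option \<times> 'a \<times> ('l, 'a) bodyelem list"

type_synonym ('l, 'a) cprogram = "('l, 'a) crule set"

type_synonym ('l, 'a) interp = "'a \<Rightarrow> 'l cval"

definition rule_val :: "'l option \<Rightarrow> 'l cval" where
  "rule_val r = (case r of None \<Rightarrow> one_val | Some l \<Rightarrow> lab_val l)"

definition is_interp :: "('l, 'a) interp \<Rightarrow> bool" where
  "is_interp I \<longleftrightarrow> (\<forall>A. is_val (I A))"

definition eval_query :: "('l, 'a) interp \<Rightarrow> 'l query \<Rightarrow> 'a \<Rightarrow> 'l cval" where
  "eval_query I \<psi> A = \<Union> {G. maxle G (I A) \<and> \<psi> G (I A)}"

fun eval_be :: "('l, 'a) interp \<Rightarrow> ('l, 'a) bodyelem \<Rightarrow> 'l cval" where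
  "eval_be I (CPos \<psi> A) = eval_query I \<psi> A"
| "eval_be I (CNeg \<psi> A) = (if eval_query I \<psi> A = {} then one_val else {})"
| "eval_be I (CCons \<psi> A) = (if eval_query I \<psi> A \<noteq> {} then one_val else {})"
| "eval_be I (BTerm t) = t"

definition is_causal_model :: "('l, 'a) cprogram \<Rightarrow> ('l, 'a) interp \<Rightarrow> bool" where
  "is_causal_model P I \<longleftrightarrow>
     (\<forall>(r, H, B) \<in> P. app_val (prod_val (eval_be I ` set B)) (rule_val r) \<subseteq> I H)"

definition least_causal_model :: "('l, 'a) cprogram \<Rightarrow> ('l, 'a) interp \<Rightarrow> bool" where
  "least_causal_model P I \<longleftrightarrow> is_interp I \<and> is_causal_model P I \<and>
     (\<forall>J. is_interp J \<longrightarrow> is_causal_model P J \<longrightarrow> (\<forall>A. I A \<subseteq> J A))"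

fun be_queries :: "('l, 'a) bodyelem \<Rightarrow> 'l query set" where
  "be_queries (CPos \<psi> A) = {\<psi>}"
| "be_queries (CNeg \<psi> A) = {\<psi>}"
| "be_queries (CCons \<psi> A) = {\<psi>}"
| "be_queries (BTerm t) = {}"

definition causal_program :: "('l, 'a) cprogram \<Rightarrow> bool" where
  "causal_program P \<longleftrightarrow> (\<forall>(r, H, B) \<in> P. \<forall>b \<in> set B.
      (\<forall>\<psi> \<in> be_queries b. causal_query \<psi>) \<and> (\<forall>t. b = BTerm t \<longrightarrow> is_val t))"

fun is_negcons :: "('l, 'a) bodyelem \<Rightarrow> bool" where
  "is_negcons (CNeg \<psi> A) = True"
| "is_negcons (CCons \<psi> A) = True"
| "is_negcons _ = False"

text \<open>Reduct of a body element (only applied to positive literals and terms).\<close>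
fun red_be :: "('l, 'a) interp \<Rightarrow> ('l, 'a) bodyelem \<Rightarrow> ('l, 'a) bodyelem" where
  "red_be I (CPos \<psi> A) =
     (if monotonic_query \<psi> then CPos \<psi> A else CPos (qred \<psi> (I A)) A)"
| "red_be I b = b"

fun ured_be :: "('l, 'a) interp \<Rightarrow> ('l, 'a) bodyelem \<Rightarrow> ('l, 'a) bodyelem" where
  "ured_be I (CPos \<psi> A) = CPos (qred \<psi> (I A)) A"
| "ured_be I b = b"

definition body_ok :: "('l, 'a) interp \<Rightarrow> ('l, 'a) bodyelem list \<Rightarrow> bool" where
  "body_ok I B \<longleftrightarrow> (\<forall>b \<in> set B. is_negcons b \<longrightarrow> eval_be I b \<noteq> {})"

definition reduct :: "('l, 'a) cprogram \<Rightarrow> ('l, 'a) interp \<Rightarrow> ('l, 'a) cprogram" where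
  "reduct P I = {(r, H, map (red_be I) (filter (\<lambda>b. \<not> is_negcons b) B)) | r H B.
                   (r, H, B) \<in> P \<and> body_ok I B}"

definition ureduct :: "('l, 'a) cprogram \<Rightarrow> ('l, 'a) interp \<Rightarrow> ('l, 'a) cprogram" where
  "ureduct P I = {(r, H, map (ured_be I) (filter (\<lambda>b. \<not> is_negcons b) B)) | r H B.
                   (r, H, B) \<in> P \<and> body_ok I B}"

end

theory Submission
  imports Defs
begin


lemma prin_mem: "cgraph M \<Longrightarrow> M \<in> prin M" by (simp add: prin_def)

lemma prin_subset_iff: "cgraph M \<Longrightarrow> prin M \<subseteq> prin N \<longleftrightarrow> N \<subseteq> M"
proof
  assume "cgraph M" "prin M \<subseteq> prin N"
  then have "M \<in> prin N" using prin_mem by blast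
  then show "N \<subseteq> M" by (simp add: prin_def)
next
  assume "N \<subseteq> M" then show "prin M \<subseteq> prin N" unfolding prin_def by blast
qed

lemma val_cgraph: "is_val v \<Longrightarrow> M \<in> v \<Longrightarrow> cgraph M"
  unfolding is_val_def by blast

lemma val_up: "is_val v \<Longrightarrow> M \<in> v \<Longrightarrow> cgraph M' \<Longrightarrow> M \<subseteq> M' \<Longrightarrow> M' \<in> v"
  unfolding is_val_def by blast

lemma val_prin_sub: "is_val v \<Longrightarrow> M \<in> v \<Longrightarrow> prin M \<subseteq> v"
  unfolding prin_def using val_up by blast

lemma cval_prin: "cgraph M \<Longrightarrow> is_cval (prin M)"
  unfolding is_cval_def by blast
lemma maxle_prinI:
  assumes v: "is_val v" and M: "M \<in> v"
    and min: "\<And>N. cgraph N \<Longrightarrow> N \<in> v \<Longrightarrow> N \<subseteq> M \<Longrightarrow> N = M"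
  shows "maxle (prin M) v"
proof -
  have cM: "cgraph M" using v M by (rule val_cgraph)
  have "\<not> (\<exists>G'. is_cval G' \<and> prin M \<subset> G' \<and> G' \<subseteq> v)"
  proof
    assume "\<exists>G'. is_cval G' \<and> prin M \<subset> G' \<and> G' \<subseteq> v"
    then obtain N where cN: "cgraph N" and s: "prin M \<subset> prin N" and sv: "prin N \<subseteq> v"
      unfolding is_cval_def by auto
    have "N \<subseteq> M" using s cM prin_subset_iff by blast
    moreover have "N \<in> v" using sv prin_mem[OF cN] by auto
    ultimately have "N = M" using min cN by blast
    then show False using s by auto
  qed
  then show ?thesis unfolding maxle_def using cval_prin[OF cM] val_prin_sub[OF v M] by auto
qed

lemma maxle_prinD:
  assumes v: "is_val v" and mx: "maxle (prin M) v" and cM: "cgraph M"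
    and cN: "cgraph N" and Nv: "N \<in> v" and NM: "N \<subseteq> M"
  shows "N = M"
proof (rule ccontr)
  assume ne: "N \<noteq> M"
  have "prin M \<subseteq> prin N" using prin_subset_iff[OF cM] NM by blast
  moreover have "prin M \<noteq> prin N"
  proof
    assume "prin M = prin N"
    then have "N \<in> prin M" using prin_mem[OF cN] by simp
    then have "M \<subseteq> N" by (simp add: prin_def)
    then show False using NM ne by auto
  qed
  moreover have "prin N \<subseteq> v" using val_prin_sub[OF v Nv] .
  ultimately show False using mx cval_prin[OF cN] unfolding maxle_def by blast
qed

lemma maxle_cval: "maxle X v \<Longrightarrow> \<exists>M. cgraph M \<and> X = prin M"
  unfolding maxle_def is_cval_def by auto

lemma finite_min:
  assumes v: "is_val v" and Mv: "M \<in> v" and fM: "finite M"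
  shows "\<exists>N. N \<subseteq> M \<and> N \<in> v \<and> maxle (prin N) v"
proof -
  define n where "n = (LEAST n. \<exists>N. N \<subseteq> M \<and> N \<in> v \<and> card N = n)"
  have ex: "\<exists>n N. N \<subseteq> M \<and> N \<in> v \<and> card N = n" using Mv by blast
  have "\<exists>N. N \<subseteq> M \<and> N \<in> v \<and> card N = n"
    unfolding n_def by (rule LeastI_ex) (use ex in blast)
  then obtain N where NM: "N \<subseteq> M" and Nv: "N \<in> v" and cN: "card N = n" by blast
  have fN: "finite N" using finite_subset[OF NM fM] .
  have "maxle (prin N) v"
  proof (rule maxle_prinI[OF v Nv])
    fix N' assume "cgraph N'" "N' \<in> v" "N' \<subseteq> N"
    then have "n \<le> card N'" unfolding n_def using NM by (intro Least_le) auto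
    then show "N' = N" using card_seteq[OF fN \<open>N' \<subseteq> N\<close>] cN by simp
  qed
  then show ?thesis using NM Nv by blast
qed

lemma shrink:
  assumes cM: "cgraph M" and iM: "infinite M" and fS: "finite S"
  shows "\<exists>M0. cgraph M0 \<and> M0 \<subseteq> M \<and> M0 \<noteq> M \<and> infinite M0 \<and>
     (\<forall>x y. (x, y) \<in> M \<longrightarrow> x \<in> S \<longrightarrow> y \<in> S \<longrightarrow> (x, y) \<in> M0)"
proof -
  have "M \<subseteq> Field M \<times> Field M" by (auto simp: Field_def Domain.DomainI Range.RangeI)
  then have iF: "infinite (Field M)" using iM finite_cartesian_product finite_subset by blast
  then have iF2: "infinite (Field M - S)" using fS by (simp add: Diff_infinite_finite)
  then obtain w where w: "w \<in> Field M" "w \<notin> S" proof -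
    from iF2 have "Field M - S \<noteq> {}" by (metis finite.emptyI)
    then show ?thesis using that by blast
  qed
  define M0 where "M0 = {(x, y). (x, y) \<in> M \<and> x \<noteq> w \<and> y \<noteq> w}"
  have c0: "cgraph M0" using cM unfolding cgraph_def M0_def trans_def by blast
  have ww: "(w, w) \<in> M" using w(1) cM unfolding cgraph_def Field_def by blast
  have "(\<lambda>x. (x, x)) ` (Field M - {w}) \<subseteq> M0"
    using cM unfolding cgraph_def M0_def Field_def by blast
  moreover have "infinite ((\<lambda>x. (x, x)) ` (Field M - {w}))"
  proof
    assume "finite ((\<lambda>x. (x, x)) ` (Field M - {w}))"
    then have "finite (Field M - {w})" by (rule finite_imageD) (auto simp: inj_on_def)
    then show False using iF by simp
  qed
  ultimately have "infinite M0" using infinite_super by blast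
  moreover have "M0 \<noteq> M" using ww by (auto simp: M0_def)
  ultimately show ?thesis using c0 w(2) by (intro exI[of _ M0]) (auto simp: M0_def)
qed



definition genred :: "('l, 'a) cprogram \<Rightarrow> ('l, 'a) interp \<Rightarrow>
   (('l, 'a) bodyelem \<Rightarrow> ('l, 'a) bodyelem) \<Rightarrow> ('l, 'a) cprogram" where
  "genred P I h = {(r, H, map h (filter (\<lambda>b. \<not> is_negcons b) B)) | r H B.
                   (r, H, B) \<in> P \<and> body_ok I B}"

lemma reduct_genred: "reduct P I = genred P I (red_be I)"
  unfolding reduct_def genred_def by (rule refl)

lemma ureduct_genred: "ureduct P I = genred P I (ured_be I)"
  unfolding ureduct_def genred_def by (rule refl)

lemma genred_model_iff:
  "is_causal_model (genred P I h) J \<longleftrightarrow>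
   (\<forall>r H B. (r, H, B) \<in> P \<longrightarrow> body_ok I B \<longrightarrow>
      app_val (prod_val ((\<lambda>c. eval_be J (h c)) ` set (filter (\<lambda>b. \<not> is_negcons b) B))) (rule_val r) \<subseteq> J H)"
proof
  assume M: "is_causal_model (genred P I h) J"
  show "\<forall>r H B. (r, H, B) \<in> P \<longrightarrow> body_ok I B \<longrightarrow>
      app_val (prod_val ((\<lambda>c. eval_be J (h c)) ` set (filter (\<lambda>b. \<not> is_negcons b) B))) (rule_val r) \<subseteq> J H"
  proof (intro allI impI)
    fix r H B assume "(r, H, B) \<in> P" "body_ok I B"
    then have "(r, H, map h (filter (\<lambda>b. \<not> is_negcons b) B)) \<in> genred P I h"
      unfolding genred_def by blast
    then have "app_val (prod_val (eval_be J ` set (map h (filter (\<lambda>b. \<not> is_negcons b) B)))) (rule_val r) \<subseteq> J H"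
      using M unfolding is_causal_model_def by blast
    moreover have "eval_be J ` set (map h (filter (\<lambda>b. \<not> is_negcons b) B)) = (\<lambda>c. eval_be J (h c)) ` set (filter (\<lambda>b. \<not> is_negcons b) B)"
      by (simp only: set_map image_comp comp_def)
    ultimately show "app_val (prod_val ((\<lambda>c. eval_be J (h c)) ` set (filter (\<lambda>b. \<not> is_negcons b) B))) (rule_val r) \<subseteq> J H"
      by simp
  qed
next
  assume R: "\<forall>r H B. (r, H, B) \<in> P \<longrightarrow> body_ok I B \<longrightarrow>
      app_val (prod_val ((\<lambda>c. eval_be J (h c)) ` set (filter (\<lambda>b. \<not> is_negcons b) B))) (rule_val r) \<subseteq> J H"
  show "is_causal_model (genred P I h) J"
    unfolding is_causal_model_def
  proof (intro ballI)
    fix x assume "x \<in> genred P I h"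
    then obtain r H B where x: "x = (r, H, map h (filter (\<lambda>b. \<not> is_negcons b) B))" "(r, H, B) \<in> P" "body_ok I B"
      unfolding genred_def by blast
    have "eval_be J ` set (map h (filter (\<lambda>b. \<not> is_negcons b) B)) = (\<lambda>c. eval_be J (h c)) ` set (filter (\<lambda>b. \<not> is_negcons b) B)"
      by (simp only: set_map image_comp comp_def)
    then show "case x of (r, H, B) \<Rightarrow> app_val (prod_val (eval_be J ` set B)) (rule_val r) \<subseteq> J H"
      using R x by simp
  qed
qed

lemma prod_val_mono:
  assumes "\<And>x. x \<in> S \<Longrightarrow> f x \<subseteq> g x"
  shows "prod_val (f ` S) \<subseteq> prod_val (g ` S)"
  unfolding prod_val_def using assms by blast

lemma app_val_mono: "t \<subseteq> t' \<Longrightarrow> app_val t u \<subseteq> app_val t' u"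
  unfolding app_val_def by blast

lemma model_transfer:
  assumes M: "is_causal_model (genred P I h2) J"
    and S: "\<And>c. \<not> is_negcons c \<Longrightarrow> eval_be J (h1 c) \<subseteq> eval_be J (h2 c)"
  shows "is_causal_model (genred P I h1) J"
  unfolding genred_model_iff
proof (intro allI impI)
  fix r H B assume "(r, H, B) \<in> P" "body_ok I B"
  then have "app_val (prod_val ((\<lambda>c. eval_be J (h2 c)) ` set (filter (\<lambda>b. \<not> is_negcons b) B))) (rule_val r) \<subseteq> J H"
    using M unfolding genred_model_iff by blast
  moreover have "prod_val ((\<lambda>c. eval_be J (h1 c)) ` set (filter (\<lambda>b. \<not> is_negcons b) B))
     \<subseteq> prod_val ((\<lambda>c. eval_be J (h2 c)) ` set (filter (\<lambda>b. \<not> is_negcons b) B))"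
    by (rule prod_val_mono) (use S in auto)
  ultimately show "app_val (prod_val ((\<lambda>c. eval_be J (h1 c)) ` set (filter (\<lambda>b. \<not> is_negcons b) B))) (rule_val r) \<subseteq> J H"
    using app_val_mono by blast
qed

lemma eval_query_mem:
  "G1 \<in> eval_query J \<phi> A \<longleftrightarrow> (\<exists>X. maxle X (J A) \<and> \<phi> X (J A) \<and> G1 \<in> X)"
  unfolding eval_query_def by blast

lemma qred_sub:
  assumes m: "monotonic_query \<psi>" and II: "is_interp I" and IJ: "is_interp J"
  shows "eval_query J (qred \<psi> (I A)) A \<subseteq> eval_query J \<psi> A"
proof
  fix G1 assume "G1 \<in> eval_query J (qred \<psi> (I A)) A"
  then obtain X where X: "maxle X (J A)" "qred \<psi> (I A) X (J A)" "G1 \<in> X"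
    unfolding eval_query_mem by blast
  then obtain G' where G': "is_cval G'" "G' \<subseteq> X" "maxle G' (I A)" "\<psi> G' (I A)"
    unfolding qred_def by blast
  have "is_cval X" using X(1) unfolding maxle_def by blast
  moreover have "is_val (I A)" "is_val (J A)" using II IJ unfolding is_interp_def by blast+
  ultimately have "\<psi> X (J A)" using m G' unfolding monotonic_query_def by blast
  then show "G1 \<in> eval_query J \<psi> A" using X unfolding eval_query_mem by blast
qed

lemma qred_sup_I:
  "eval_query I \<psi> A \<subseteq> eval_query I (qred \<psi> (I A)) A"
proof
  fix G1 assume "G1 \<in> eval_query I \<psi> A"
  then obtain X where X: "maxle X (I A)" "\<psi> X (I A)" "G1 \<in> X"
    unfolding eval_query_mem by blast
  have "is_cval X" using X(1) unfolding maxle_def by blast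
  then have "qred \<psi> (I A) X (I A)" unfolding qred_def using X by blast
  then show "G1 \<in> eval_query I (qred \<psi> (I A)) A" using X unfolding eval_query_mem by blast
qed

lemma E1:
  assumes "is_interp I" "is_interp J"
  shows "eval_be J (ured_be I c) \<subseteq> eval_be J (red_be I c)"
proof (cases c)
  case (CPos \<psi> A)
  then show ?thesis using qred_sub[OF _ assms] by auto
qed auto

lemma E2: "eval_be I (red_be I c) \<subseteq> eval_be I (ured_be I c)"
proof (cases c)
  case (CPos \<psi> A)
  then show ?thesis using qred_sup_I[of I \<psi> A] by auto
qed auto



lemma mono_app:
  assumes "monotonic_query \<psi>" "is_cval G" "is_cval G'" "is_val u" "is_val w" "G \<subseteq> G'" "\<psi> G u"
  shows "\<psi> G' w"
  using assms unfolding monotonic_query_def by blast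

lemma hard:
  assumes II: "is_interp I" and LI: "least_causal_model (reduct P I) I"
    and IJ: "is_interp J" and MJ: "is_causal_model (ureduct P I) J"
  shows "I A \<subseteq> J A"
proof (rule ccontr)
  assume "\<not> I A \<subseteq> J A"
  then obtain A0 G0 where G0: "G0 \<in> I A0" "G0 \<notin> J A0" by auto
  have "\<exists>H G. G \<in> I H \<and> G \<notin> J H \<and> (\<forall>X N. finite N \<longrightarrow> N \<subset> G \<longrightarrow> N \<in> I X \<longrightarrow> N \<in> J X)"
  proof (cases "\<exists>X N. finite N \<and> N \<in> I X \<and> N \<notin> J X")
    case True
    define n where "n = (LEAST n. \<exists>X N. finite N \<and> N \<in> I X \<and> N \<notin> J X \<and> card N = n)"
    have ex: "\<exists>n X N. finite N \<and> N \<in> I X \<and> N \<notin> J X \<and> card N = n" using True by blast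
    have "\<exists>X N. finite N \<and> N \<in> I X \<and> N \<notin> J X \<and> card N = n"
      unfolding n_def by (rule LeastI_ex) (use ex in blast)
    then obtain H G where HG: "finite G" "G \<in> I H" "G \<notin> J H" "card G = n" by blast
    have "\<forall>X N. finite N \<longrightarrow> N \<subset> G \<longrightarrow> N \<in> I X \<longrightarrow> N \<in> J X"
    proof (intro allI impI)
      fix X N assume N: "finite N" "N \<subset> G" "N \<in> I X"
      show "N \<in> J X"
      proof (rule ccontr)
        assume "N \<notin> J X"
        then have "n \<le> card N" unfolding n_def using N by (intro Least_le) blast
        moreover have "card N < card G" using psubset_card_mono[OF HG(1) N(2)] .
        ultimately show False using HG(4) by simp
      qed
    qed
    then show ?thesis using HG by blast
  next
    case False
    then show ?thesis using G0 by blast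
  qed
  then obtain H G where GI: "G \<in> I H" and GJ: "G \<notin> J H"
    and Q: "\<And>X N. finite N \<Longrightarrow> N \<subset> G \<Longrightarrow> N \<in> I X \<Longrightarrow> N \<in> J X" by blast
  have valI: "\<And>X. is_val (I X)" using II unfolding is_interp_def by blast
  have valJ: "\<And>X. is_val (J X)" using IJ unfolding is_interp_def by blast
  have cgG: "cgraph G" using val_cgraph[OF valI GI] .
  define K where "K X = {G'. G' \<in> I X \<and> (G' \<in> J X \<or> \<not> G' \<subseteq> G)} \<union>
      {G'. cgraph G' \<and> infinite G' \<and> (X \<noteq> H \<or> \<not> G' \<subseteq> G)}" for X
  have valK: "is_val (K X)" for X
    unfolding is_val_def
  proof (intro conjI allI impI ballI)
    fix G' assume "G' \<in> K X"
    then show "cgraph G'" unfolding K_def using val_cgraph[OF valI] by blast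
  next
    fix G' G'' assume a: "G' \<in> K X" "cgraph G''" "G' \<subseteq> G''"
    show "G'' \<in> K X"
    proof (cases "G' \<in> I X \<and> (G' \<in> J X \<or> \<not> G' \<subseteq> G)")
      case True
      then have "G'' \<in> I X" using val_up[OF valI] a by blast
      moreover have "G'' \<in> J X \<or> \<not> G'' \<subseteq> G" using True val_up[OF valJ] a by blast
      ultimately show ?thesis unfolding K_def by blast
    next
      case False
      then have "infinite G'" "X \<noteq> H \<or> \<not> G' \<subseteq> G" using a(1) unfolding K_def by blast+
      then have "infinite G''" "X \<noteq> H \<or> \<not> G'' \<subseteq> G" using a(3) infinite_super by blast+
      then show ?thesis using a(2) unfolding K_def by blast
    qed
  qed
  have KI: "is_interp K" unfolding is_interp_def using valK by blast
  have Kfin: "finite M" if mx: "maxle (prin M) (K X)" and cM: "cgraph M" for X M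
  proof (rule ccontr)
    assume iM: "infinite M"
    have MK: "M \<in> K X" using mx prin_mem[OF cM] unfolding maxle_def by blast
    have "\<exists>M0. cgraph M0 \<and> M0 \<subseteq> M \<and> M0 \<noteq> M \<and> M0 \<in> K X"
    proof (cases "X = H")
      case True
      have "\<not> M \<subseteq> G"
      proof
        assume MG: "M \<subseteq> G"
        then have "M \<in> J H" using MK True unfolding K_def by blast
        then have "G \<in> J H" using val_up[OF valJ _ cgG MG] by blast
        then show False using GJ by blast
      qed
      then obtain u v where uv: "(u, v) \<in> M" "(u, v) \<notin> G" by auto
      obtain M0 where M0: "cgraph M0" "M0 \<subseteq> M" "M0 \<noteq> M" "infinite M0"
        "\<forall>x y. (x, y) \<in> M \<longrightarrow> x \<in> {u, v} \<longrightarrow> y \<in> {u, v} \<longrightarrow> (x, y) \<in> M0"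
        using shrink[OF cM iM, of "{u, v}"] by blast
      have "(u, v) \<in> M0" using M0(5) uv(1) by blast
      then have "\<not> M0 \<subseteq> G" using uv(2) by blast
      then have "M0 \<in> K X" using M0 unfolding K_def by blast
      then show ?thesis using M0 by blast
    next
      case False
      obtain M0 where M0: "cgraph M0" "M0 \<subseteq> M" "M0 \<noteq> M" "infinite M0"
        using shrink[OF cM iM, of "{}"] by blast
      then have "M0 \<in> K X" using False unfolding K_def by blast
      then show ?thesis using M0 by blast
    qed
    then obtain M0 where "cgraph M0" "M0 \<subseteq> M" "M0 \<noteq> M" "M0 \<in> K X" by blast
    then show False using maxle_prinD[OF valK mx cM] by blast
  qed
  have key: "G1 \<in> eval_be I (red_be I c) \<and> (G1 \<subseteq> G \<longrightarrow> G1 \<in> eval_be J (ured_be I c))"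
    if nn: "\<not> is_negcons c" and G1: "G1 \<in> eval_be K (red_be I c)" for c G1
  proof (cases c)
    case (CPos \<psi> A)
    define \<phi> where "\<phi> = (if monotonic_query \<psi> then \<psi> else qred \<psi> (I A))"
    have "red_be I c = CPos \<phi> A" unfolding \<phi>_def CPos by simp
    then have "G1 \<in> eval_query K \<phi> A" using G1 by simp
    then obtain X where X: "maxle X (K A)" "\<phi> X (K A)" "G1 \<in> X"
      unfolding eval_query_mem by blast
    obtain M where cM: "cgraph M" and XM: "X = prin M" using maxle_cval[OF X(1)] by blast
    have mx: "maxle (prin M) (K A)" using X(1) XM by simp
    have MK: "M \<in> K A" using mx prin_mem[OF cM] unfolding maxle_def by blast
    have fM: "finite M" using Kfin[OF mx cM] .
    have Mbase: "M \<in> I A" "M \<in> J A \<or> \<not> M \<subseteq> G" using MK fM unfolding K_def by blast+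
    have MG1: "M \<subseteq> G1" using X(3) XM unfolding prin_def by blast
    have cG1: "cgraph G1" using X(3) XM unfolding prin_def by blast
    have minK: "\<And>N'. cgraph N' \<Longrightarrow> N' \<in> K A \<Longrightarrow> N' \<subseteq> M \<Longrightarrow> N' = M"
      using maxle_prinD[OF valK mx cM] by blast
    obtain N where NM: "N \<subseteq> M" and NI: "N \<in> I A" and mN: "maxle (prin N) (I A)"
      using finite_min[OF valI Mbase(1) fM] by blast
    have cN: "cgraph N" using val_cgraph[OF valI NI] .
    have G1N: "G1 \<in> prin N" using NM MG1 cG1 unfolding prin_def by blast
    have MI: "maxle (prin M) (I A) \<and> \<psi> (prin M) (I A)" if MGG: "M \<subseteq> G"
    proof (cases "monotonic_query \<psi>")
      case True
      have "N \<in> J A"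
      proof (cases "N = G")
        case True
        then have "M = G" using NM MGG by blast
        then show ?thesis using Mbase(2) True MGG by blast
      next
        case False
        then have "N \<subset> G" using NM MGG by blast
        then show ?thesis using Q[OF finite_subset[OF NM fM] _ NI] by blast
      qed
      then have "N \<in> K A" using NI unfolding K_def by blast
      then have "N = M" using minK[OF cN] NM by blast
      moreover have "\<psi> (prin M) (K A)" using True X(2) XM unfolding \<phi>_def by simp
      then have "\<psi> (prin M) (I A)"
        using mono_app[OF True cval_prin[OF cM] cval_prin[OF cM] valK valI] by blast
      ultimately show ?thesis using mN by blast
    next
      case False
      then have "qred \<psi> (I A) (prin M) (K A)" using X(2) XM unfolding \<phi>_def by simp
      then obtain G'' where G'': "is_cval G''" "G'' \<subseteq> prin M" "maxle G'' (I A)" "\<psi> G'' (I A)"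
        unfolding qred_def by blast
      have "G'' = prin M"
        using G'' cval_prin[OF cM] val_prin_sub[OF valI Mbase(1)] unfolding maxle_def by blast
      then show ?thesis using G'' by blast
    qed
    have Ipart: "G1 \<in> eval_be I (red_be I c)"
    proof (cases "monotonic_query \<psi>")
      case True
      have "\<psi> (prin M) (K A)" using X(2) XM True unfolding \<phi>_def by simp
      moreover have "prin M \<subseteq> prin N" using prin_subset_iff[OF cM] NM by blast
      ultimately have "\<psi> (prin N) (I A)"
        using mono_app[OF True cval_prin[OF cM] cval_prin[OF cN] valK valI] by blast
      then have "G1 \<in> eval_query I \<psi> A" unfolding eval_query_mem using mN G1N by blast
      then show ?thesis using CPos True by simp
    next
      case False
      have q: "qred \<psi> (I A) (prin M) (K A)" using X(2) XM False unfolding \<phi>_def by simp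
      then obtain G'' where G'': "is_cval G''" "G'' \<subseteq> prin M" "maxle G'' (I A)" "\<psi> G'' (I A)"
        unfolding qred_def by blast
      have e: "G'' = prin M"
        using G'' cval_prin[OF cM] val_prin_sub[OF valI Mbase(1)] unfolding maxle_def by blast
      have "qred \<psi> (I A) (prin M) (I A)" using q unfolding qred_def by blast
      then have "G1 \<in> eval_query I (qred \<psi> (I A)) A"
        unfolding eval_query_mem using G'' e X(3) XM by blast
      then show ?thesis using CPos False by simp
    qed
    have Jpart: "G1 \<in> eval_be J (ured_be I c)" if G1G: "G1 \<subseteq> G"
    proof -
      have MGG: "M \<subseteq> G" using MG1 G1G by blast
      then have MJ': "M \<in> J A" using Mbase(2) by blast
      obtain M' where M'M: "M' \<subseteq> M" and M'J: "M' \<in> J A" and mM': "maxle (prin M') (J A)"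
        using finite_min[OF valJ MJ' fM] by blast
      have "prin M \<subseteq> prin M'" using prin_subset_iff[OF cM] M'M by blast
      then have "qred \<psi> (I A) (prin M') (J A)"
        unfolding qred_def using MI[OF MGG] cval_prin[OF cM] by blast
      moreover have "G1 \<in> prin M'" using M'M MG1 cG1 unfolding prin_def by blast
      ultimately have "G1 \<in> eval_query J (qred \<psi> (I A)) A"
        unfolding eval_query_mem using mM' by blast
      then show ?thesis using CPos by simp
    qed
    show ?thesis using Ipart Jpart by blast
  next
    case (BTerm t)
    then show ?thesis using G1 by simp
  qed (use nn in simp_all)
  have MI0: "is_causal_model (reduct P I) I" using LI unfolding least_causal_model_def by blast
  have MK: "is_causal_model (reduct P I) K"
    unfolding reduct_genred genred_model_iff
  proof (intro allI impI subsetI)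
    fix r H' B G' assume rP: "(r, H', B) \<in> P" and bo: "body_ok I B"
      and G': "G' \<in> app_val (prod_val ((\<lambda>c. eval_be K (red_be I c)) ` set (filter (\<lambda>b. \<not> is_negcons b) B))) (rule_val r)"
    let ?L = "set (filter (\<lambda>b. \<not> is_negcons b) B)"
    obtain G1 G2 where cG': "cgraph G'" and G1: "G1 \<in> prod_val ((\<lambda>c. eval_be K (red_be I c)) ` ?L)"
      and G2: "G2 \<in> rule_val r" and gc: "gcat G1 G2 \<subseteq> G'"
      using G' unfolding app_val_def by blast
    have G1o: "G1 \<in> one_val" and G1all: "\<And>c. c \<in> ?L \<Longrightarrow> G1 \<in> eval_be K (red_be I c)"
      using G1 unfolding prod_val_def by blast+
    have nnL: "\<And>c. c \<in> ?L \<Longrightarrow> \<not> is_negcons c" by simp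
    have "G1 \<in> prod_val ((\<lambda>c. eval_be I (red_be I c)) ` ?L)"
      unfolding prod_val_def using G1o G1all key nnL by blast
    then have "G' \<in> app_val (prod_val ((\<lambda>c. eval_be I (red_be I c)) ` ?L)) (rule_val r)"
      unfolding app_val_def using cG' G2 gc by blast
    then have G'I: "G' \<in> I H'" using MI0 rP bo unfolding reduct_genred genred_model_iff by blast
    have G1G': "G1 \<subseteq> G'" using gc unfolding gcat_def by (meson Un_subset_iff r_into_trancl' subset_iff)
    have "G' \<in> J H'" if G'G: "G' \<subseteq> G"
    proof -
      have "G1 \<subseteq> G" using G1G' G'G by blast
      then have "G1 \<in> prod_val ((\<lambda>c. eval_be J (ured_be I c)) ` ?L)"
        unfolding prod_val_def using G1o G1all key nnL by blast
      then have "G' \<in> app_val (prod_val ((\<lambda>c. eval_be J (ured_be I c)) ` ?L)) (rule_val r)"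
        unfolding app_val_def using cG' G2 gc by blast
      then show ?thesis using MJ rP bo unfolding ureduct_genred genred_model_iff by blast
    qed
    then show "G' \<in> K H'" using G'I unfolding K_def by blast
  qed
  have "I H \<subseteq> K H" using LI KI MK unfolding least_causal_model_def by blast
  then have "G \<in> K H" using GI by blast
  then show False using GJ unfolding K_def by blast
qed

theorem mainTheorem15:
  fixes P :: "('l, 'a) cprogram" and I :: "('l, 'a) interp"
  assumes "causal_program P" and "is_interp I"
  shows "least_causal_model (reduct P I) I \<longleftrightarrow> least_causal_model (ureduct P I) I"
proof
  assume L: "least_causal_model (reduct P I) I"
  have "is_causal_model (ureduct P I) I"
    unfolding ureduct_genred
    by (rule model_transfer[of P I "red_be I" I "ured_be I"])
       (use L E1[OF assms(2) assms(2)] in \<open>auto simp: least_causal_model_def reduct_genred\<close>)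
  moreover have "\<forall>J. is_interp J \<longrightarrow> is_causal_model (ureduct P I) J \<longrightarrow> (\<forall>A. I A \<subseteq> J A)"
    using hard[OF assms(2) L] by blast
  ultimately show "least_causal_model (ureduct P I) I"
    using assms(2) unfolding least_causal_model_def by blast
next
  assume L: "least_causal_model (ureduct P I) I"
  have "is_causal_model (reduct P I) I"
    unfolding reduct_genred
    by (rule model_transfer[of P I "ured_be I" I "red_be I"])
       (use L E2[of I] in \<open>auto simp: least_causal_model_def ureduct_genred\<close>)
  moreover have "\<forall>J. is_interp J \<longrightarrow> is_causal_model (reduct P I) J \<longrightarrow> (\<forall>A. I A \<subseteq> J A)"
  proof (intro allI impI)
    fix J A assume IJ: "is_interp J" and MJ: "is_causal_model (reduct P I) J"
    have "is_causal_model (ureduct P I) J"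
      unfolding ureduct_genred
      by (rule model_transfer[of P I "red_be I" J "ured_be I"])
         (use MJ E1[OF assms(2) IJ] in \<open>auto simp: reduct_genred\<close>)
    then show "I A \<subseteq> J A" using L IJ unfolding least_causal_model_def by blast
  qed
  ultimately show "least_causal_model (reduct P I) I"
    using assms(2) unfolding least_causal_model_def by blast
qed

end
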